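(* For every $\Xi=(\xi_1,\dots,\xi_{n-1})\in\{0,1\}^{n-1}$, the set $B_\Xi$ is stable under all Kashiwara operators $\tilde e_i,\tilde f_i$ (i.e. if $b\in B_\Xi$ and $\tilde e_i b\neq 0$ then $\tilde e_i b\in B_\Xi$, and likewise for $\tilde f_i$) of the $\mathfrak{gl}_{2n}$-crystal $B^A(1)^{\otimes n}$ ($i=1,\dots,2n-1$), and also of the $\mathfrak{sp}_{2n}$-crystal $B^C(1)^{\otimes n}$ ($i=1,\dots,n$). Hence $B_\Xi$ is a union of connected components for both crystal structures.
   Context: Let $\mathcal{C}_n$ be the totally ordered alphabet $1<2<\cdots<n<\bar n<\overline{n-1}<\cdots<\bar1$. The crystal $B^A(1)$ of the vector representation of $U_q(\mathfrak{gl}_{2n})$ has vertex set $\mathcal{C}_n$ and arrows $1\xrightarrow{1}2\xrightarrow{2}\cdots\xrightarrow{n-1}n\xrightarrow{n}\bar n\xrightarrow{n+1}\overline{n-1}\xrightarrow{n+2}\cdots\xrightarrow{2n-1}\bar1$. The crystal $B^C(1)$ of the vector representation of $U_q(\mathfrak{sp}_{2n})$ has the same vertex set and arrows $k\xrightarrow{k}k+1$ and $\overline{k+1}\xrightarrow{k}\bar k$ for $1\le k\le n-1$, and $n\xrightarrow{n}\bar n$. Here $a\xrightarrow{i}b$ means $\tilde f_i a=b$, $\tilde e_i b=a$; $\varepsilon_i(b)$, $\varphi_i(b)$ are the number of times $\tilde e_i$, resp. $\tilde f_i$, can be applied to $b$. Tensor products use Kashiwara's convention: $\tilde f_i(b_1\otimes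 b_2)=\tilde f_ib_1\otimes b_2$ if $\varphi_i(b_1)>\varepsilon_i(b_2)$ and $b_1\otimes\tilde f_ib_2$ otherwise; $\tilde e_i(b_1\otimes b_2)=\tilde e_ib_1\otimes b_2$ if $\varphi_i(b_1)\ge\varepsilon_i(b_2)$ and $b_1\otimes\tilde e_ib_2$ otherwise; $n$-fold tensor powers are formed iteratively. Vertices of $B^A(1)^{\otimes n}$ and $B^C(1)^{\otimes n}$ are words $x_1\otimes\cdots\otimes x_n$ with $x_i\in\mathcal{C}_n$. For such a word define $\Xi(b)=(\xi_1,\dots,\xi_{n-1})$ with $\xi_i=0$ if $x_i<x_{i+1}$ and $\xi_i=1$ if $x_i\ge x_{i+1}$, and $B_\Xi=\{b:\Xi(b)=\Xi\}$. *)

theory Defs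
  imports Main
begin

text \<open>Letters of the alphabet C_n are encoded by their position in the total order
  1 < 2 < ... < n < bar n < ... < bar 1, i.e. by natural numbers 1..2n:
  the unbarred letter k is encoded as k, the barred letter bar k as 2n+1-k.\<close>

definition unb :: "nat \<Rightarrow> nat" where "unb k = k"
definition bar :: "nat \<Rightarrow> nat \<Rightarrow> nat" where "bar n k = 2 * n + 1 - k"

definition alphabet :: "nat \<Rightarrow> nat set" where "alphabet n = {1 .. 2 * n}"

text \<open>Kashiwara operators: (op i b = None) means op i b = 0.\<close>
type_synonym 'b kop = "nat \<Rightarrow> 'b \<Rightarrow> 'b option"

text \<open>Number of times an operator can be applied (epsilon for e, phi for f).\<close>
definition times_applicable :: "'b kop \<Rightarrow> nat \<Rightarrow> 'b \<Rightarrow> nat" where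
  "times_applicable op i b =
     (GREATEST m. ((\<lambda>ob. Option.bind ob (op i)) ^^ m) (Some b) \<noteq> None)"

text \<open>Kashiwara's tensor product convention.\<close>
definition tens_f :: "'a kop \<Rightarrow> 'a kop \<Rightarrow> 'b kop \<Rightarrow> 'b kop \<Rightarrow> ('a \<times> 'b) kop" where
  "tens_f e1 f1 e2 f2 i p = (case p of (b1, b2) \<Rightarrow>
     if times_applicable f1 i b1 > times_applicable e2 i b2
     then map_option (\<lambda>c. (c, b2)) (f1 i b1)
     else map_option (\<lambda>c. (b1, c)) (f2 i b2))"

definition tens_e :: "'a kop \<Rightarrow> 'a kop \<Rightarrow> 'b kop \<Rightarrow> 'b kop \<Rightarrow> ('a \<times> 'b) kop" where
  "tens_e e1 f1 e2 f2 i p = (case p of (b1, b2) \<Rightarrow>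
     if times_applicable f1 i b1 \<ge> times_applicable e2 i b2
     then map_option (\<lambda>c. (c, b2)) (e1 i b1)
     else map_option (\<lambda>c. (b1, c)) (e2 i b2))"

text \<open>Iterated tensor power: a word x_1 ... x_k (list) is (x_1 ... x_{k-1}) \<otimes> x_k.
  word_ops e f k gives (e, f) on words of length k; level 0 is the trivial crystal.\<close>
fun word_ops :: "nat kop \<Rightarrow> nat kop \<Rightarrow> nat \<Rightarrow> nat list kop \<times> nat list kop" where
  "word_ops e f 0 = (\<lambda>i w. None, \<lambda>i w. None)"
| "word_ops e f (Suc k) =
     (let E = fst (word_ops e f k); F = snd (word_ops e f k);
          join = (\<lambda>(u, x). u @ [x]) in
      (\<lambda>i w. map_option join (tens_e E F e f i (butlast w, last w)),
       \<lambda>i w. map_option join (tens_f E F e f i (butlast w, last w))))"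

definition fA :: "nat \<Rightarrow> nat kop" where
  "fA n i a = (if 1 \<le> i \<and> i < 2 * n \<and> a = i then Some (i + 1) else None)"
definition eA :: "nat \<Rightarrow> nat kop" where
  "eA n i a = (if 1 \<le> i \<and> i < 2 * n \<and> a = i + 1 then Some i else None)"

definition fC :: "nat \<Rightarrow> nat kop" where
  "fC n i a = (if 1 \<le> i \<and> i < n \<and> a = unb i then Some (unb (i + 1))
              else if 1 \<le> i \<and> i < n \<and> a = bar n (i + 1) then Some (bar n i)
              else if i = n \<and> a = unb n then Some (bar n n)
              else None)"
definition eC :: "nat \<Rightarrow> nat kop" where
  "eC n i a = (if 1 \<le> i \<and> i < n \<and> a = unb (i + 1) then Some (unb i)
              else if 1 \<le> i \<and> i < n \<and> a = bar n i then Some (bar n (i + 1))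
              else if i = n \<and> a = bar n n then Some (unb n)
              else None)"

definition eAw :: "nat \<Rightarrow> nat list kop" where "eAw n = fst (word_ops (eA n) (fA n) n)"
definition fAw :: "nat \<Rightarrow> nat list kop" where "fAw n = snd (word_ops (eA n) (fA n) n)"
definition eCw :: "nat \<Rightarrow> nat list kop" where "eCw n = fst (word_ops (eC n) (fC n) n)"
definition fCw :: "nat \<Rightarrow> nat list kop" where "fCw n = snd (word_ops (eC n) (fC n) n)"

definition words :: "nat \<Rightarrow> nat list set" where
  "words n = {w. length w = n \<and> set w \<subseteq> alphabet n}"

definition Xi :: "nat list \<Rightarrow> nat list" where
  "Xi w = map (\<lambda>i. if w ! i < w ! (i + 1) then 0 else 1) [0 ..< length w - 1]"

definition BXi :: "nat \<Rightarrow> nat list \<Rightarrow> nat list set" where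
  "BXi n \<Xi> = {b \<in> words n. Xi b = \<Xi>}"

definition crystal_edges :: "nat list set \<Rightarrow> nat set \<Rightarrow> nat list kop \<Rightarrow> nat list kop \<Rightarrow> (nat list \<times> nat list) set" where
  "crystal_edges V I E F = {(b, b'). b \<in> V \<and> b' \<in> V \<and> (\<exists>i\<in>I. E i b = Some b' \<or> F i b = Some b')}"

end

theory Submission
  imports Defs
begin

definition cr :: "'b set \<Rightarrow> 'b kop \<Rightarrow> 'b kop \<Rightarrow> (nat \<Rightarrow> 'b \<Rightarrow> nat) \<Rightarrow> (nat \<Rightarrow> 'b \<Rightarrow> nat) \<Rightarrow> bool" where
"cr V E F phi eps \<longleftrightarrow> (\<forall>i. \<forall>b\<in>V.
   (F i b = None \<longleftrightarrow> phi i b = 0) \<and> (E i b = None \<longleftrightarrow> eps i b = 0) \<and>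
   (\<forall>c. F i b = Some c \<longrightarrow> c \<in> V \<and> E i c = Some b \<and> phi i c = phi i b - 1) \<and>
   (\<forall>c. E i b = Some c \<longrightarrow> c \<in> V \<and> F i c = Some b \<and> eps i c = eps i b - 1))"

lemma iter_None: "((\<lambda>ob. Option.bind ob (g :: 'a \<Rightarrow> 'a option)) ^^ m) None = None"
proof (induction m)
  case 0 show ?case by simp
next
  case (Suc m) then show ?case by simp
qed

lemma ta_aux:
  assumes "\<forall>b\<in>V. (G b = None \<longleftrightarrow> h b = 0) \<and> (\<forall>c. G b = Some c \<longrightarrow> c \<in> V \<and> h c = h b - 1)"
  shows "b \<in> V \<Longrightarrow> (((\<lambda>ob. Option.bind ob G) ^^ m) (Some b) \<noteq> None) = (m \<le> h b)"
proof (induction m arbitrary: b)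
  case 0 then show ?case by simp
next
  case (Suc m)
  have eq: "((\<lambda>ob. Option.bind ob G) ^^ Suc m) (Some b) = ((\<lambda>ob. Option.bind ob G) ^^ m) (G b)"
    by (simp add: funpow_Suc_right del: funpow.simps)
  show ?case
  proof (cases "G b")
    case None
    then have "h b = 0" using assms Suc.prems by auto
    moreover have "((\<lambda>ob. Option.bind ob G) ^^ Suc m) (Some b) = None"
      using eq None by (simp only: iter_None)
    ultimately show ?thesis by simp
  next
    case (Some c)
    then have "c \<in> V" "h c = h b - 1" "h b \<noteq> 0" using assms Suc.prems by auto
    then show ?thesis using Suc.IH[of c] eq Some by auto
  qed
qed

lemma ta_gen:
  assumes "\<forall>b\<in>V. (F i b = None \<longleftrightarrow> h b = 0) \<and> (\<forall>c. F i b = Some c \<longrightarrow> c \<in> V \<and> h c = h b - 1)" "b \<in> V"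
  shows "times_applicable F i b = h b"
  unfolding times_applicable_def
proof (rule Greatest_equality)
  have P: "\<And>m. (((\<lambda>ob. Option.bind ob (F i)) ^^ m) (Some b) \<noteq> None) = (m \<le> h b)"
    using ta_aux[OF assms(1) assms(2)] by blast
  show "((\<lambda>ob. Option.bind ob (F i)) ^^ h b) (Some b) \<noteq> None" using P[of "h b"] by blast
  fix y assume "((\<lambda>ob. Option.bind ob (F i)) ^^ y) (Some b) \<noteq> None"
  then show "y \<le> h b" using P[of y] by blast
qed

lemma cr_phi: assumes C: "cr V E F phi eps" and b: "b \<in> V" shows "times_applicable F i b = phi i b"
proof (rule ta_gen[where V=V and h="phi i"])
  show "b \<in> V" by (rule b)
  show "\<forall>b\<in>V. (F i b = None \<longleftrightarrow> phi i b = 0) \<and> (\<forall>c. F i b = Some c \<longrightarrow> c \<in> V \<and> phi i c = phi i b - 1)"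
  proof
    fix b assume "b \<in> V"
    then have "(F i b = None \<longleftrightarrow> phi i b = 0) \<and> (E i b = None \<longleftrightarrow> eps i b = 0) \<and>
      (\<forall>c. F i b = Some c \<longrightarrow> c \<in> V \<and> E i c = Some b \<and> phi i c = phi i b - 1) \<and>
      (\<forall>c. E i b = Some c \<longrightarrow> c \<in> V \<and> F i c = Some b \<and> eps i c = eps i b - 1)"
      using C unfolding cr_def by blast
    then show "(F i b = None \<longleftrightarrow> phi i b = 0) \<and> (\<forall>c. F i b = Some c \<longrightarrow> c \<in> V \<and> phi i c = phi i b - 1)"
      by blast
  qed
qed

lemma cr_eps: assumes C: "cr V E F phi eps" and b: "b \<in> V" shows "times_applicable E i b = eps i b"
proof (rule ta_gen[where V=V and h="eps i"])
  show "b \<in> V" by (rule b)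
  show "\<forall>b\<in>V. (E i b = None \<longleftrightarrow> eps i b = 0) \<and> (\<forall>c. E i b = Some c \<longrightarrow> c \<in> V \<and> eps i c = eps i b - 1)"
  proof
    fix b assume "b \<in> V"
    then have "(F i b = None \<longleftrightarrow> phi i b = 0) \<and> (E i b = None \<longleftrightarrow> eps i b = 0) \<and>
      (\<forall>c. F i b = Some c \<longrightarrow> c \<in> V \<and> E i c = Some b \<and> phi i c = phi i b - 1) \<and>
      (\<forall>c. E i b = Some c \<longrightarrow> c \<in> V \<and> F i c = Some b \<and> eps i c = eps i b - 1)"
      using C unfolding cr_def by blast
    then show "(E i b = None \<longleftrightarrow> eps i b = 0) \<and> (\<forall>c. E i b = Some c \<longrightarrow> c \<in> V \<and> eps i c = eps i b - 1)"
      by blast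
  qed
qed

lemma Xi_single: "Xi [x] = []" by (simp add: Xi_def)

lemma Xi_snoc: "u \<noteq> [] \<Longrightarrow> Xi (u @ [x]) = Xi u @ [if last u < x then 0 else 1]"
proof -
  assume "u \<noteq> []"
  then obtain m where m: "length u = Suc m" by (cases u) auto
  have "[0..<Suc m] = [0..<m] @ [m]" by simp
  moreover have "last u = u ! m" using m \<open>u \<noteq> []\<close> by (simp add: last_conv_nth)
  ultimately show ?thesis using m unfolding Xi_def
    by (auto simp: nth_append)
qed

definition base :: "nat set \<Rightarrow> nat kop \<Rightarrow> nat kop \<Rightarrow> bool" where
"base A e f \<longleftrightarrow> (\<forall>i a b. f i a = Some b \<longleftrightarrow> e i b = Some a) \<and> (\<forall>i a b. f i a = Some b \<longrightarrow> b = Suc a)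
   \<and> (\<forall>i a. f i a \<noteq> None \<longrightarrow> e i a = None)
   \<and> (\<forall>i a b. f i a = Some b \<longrightarrow> b \<in> A) \<and> (\<forall>i a b. e i a = Some b \<longrightarrow> b \<in> A)"

definition ph0 :: "nat kop \<Rightarrow> nat \<Rightarrow> nat \<Rightarrow> nat" where
"ph0 f i a = (if f i a = None then 0 else 1)"

lemma base_cr: "base A e f \<Longrightarrow> cr UNIV e f (ph0 f) (ph0 e)"
  unfolding base_def cr_def ph0_def by (auto; metis option.distinct(1))

lemma levels:
  assumes B: "base A e f"
  shows "\<exists>phi eps. cr {w. length w = k} (fst (word_ops e f k)) (snd (word_ops e f k)) phi eps \<and>
 (\<forall>i u. length u = k \<longrightarrow> u \<noteq> [] \<longrightarrow> f i (last u) \<noteq> None \<longrightarrow> phi i u \<ge> 1) \<and>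
 (\<forall>i u u'. length u = k \<longrightarrow> snd (word_ops e f k) i u = Some u' \<longrightarrow> Xi u' = Xi u \<and> (set u \<subseteq> A \<longrightarrow> set u' \<subseteq> A) \<and>
     (last u' = last u \<or> (f i (last u) = Some (last u') \<and> phi i u = 1))) \<and>
 (\<forall>i u u'. length u = k \<longrightarrow> fst (word_ops e f k) i u = Some u' \<longrightarrow> Xi u' = Xi u \<and> (set u \<subseteq> A \<longrightarrow> set u' \<subseteq> A) \<and>
     (last u' = last u \<or> (e i (last u) = Some (last u') \<and> phi i u = 0)))"
proof (induction k)
  case 0
  show ?case by (rule exI[of _ "\<lambda>_ _. 0"], rule exI[of _ "\<lambda>_ _. 0"]) (simp add: cr_def)
next
  case (Suc k)
  from Suc.IH obtain phi eps where
    C: "cr {w. length w = k} (fst (word_ops e f k)) (snd (word_ops e f k)) phi eps" and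
    I1: "\<And>i u. length u = k \<Longrightarrow> u \<noteq> [] \<Longrightarrow> f i (last u) \<noteq> None \<Longrightarrow> phi i u \<ge> 1" and
    I2: "\<And>i u u'. length u = k \<Longrightarrow> snd (word_ops e f k) i u = Some u' \<Longrightarrow> Xi u' = Xi u \<and> (set u \<subseteq> A \<longrightarrow> set u' \<subseteq> A) \<and>
     (last u' = last u \<or> (f i (last u) = Some (last u') \<and> phi i u = 1))" and
    I3: "\<And>i u u'. length u = k \<Longrightarrow> fst (word_ops e f k) i u = Some u' \<Longrightarrow> Xi u' = Xi u \<and> (set u \<subseteq> A \<longrightarrow> set u' \<subseteq> A) \<and>
     (last u' = last u \<or> (e i (last u) = Some (last u') \<and> phi i u = 0))"
    by blast
  define Ek where "Ek = fst (word_ops e f k)"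
  define Fk where "Fk = snd (word_ops e f k)"
  define E' where "E' = fst (word_ops e f (Suc k))"
  define F' where "F' = snd (word_ops e f (Suc k))"
  have Ck: "cr {w. length w = k} Ek Fk phi eps" using C by (simp add: Ek_def Fk_def)
  have Cb: "cr UNIV e f (ph0 f) (ph0 e)" using base_cr[OF B] .
  have fe: "\<And>i a b. f i a = Some b \<longleftrightarrow> e i b = Some a" and fs: "\<And>i a b. f i a = Some b \<Longrightarrow> b = Suc a"
    and dj: "\<And>i a. f i a \<noteq> None \<Longrightarrow> e i a = None"
    and fA: "\<And>i a b. f i a = Some b \<Longrightarrow> b \<in> A" and eA: "\<And>i a b. e i a = Some b \<Longrightarrow> b \<in> A"
    using B unfolding base_def by blast+
  have Fk_None: "\<And>i u. length u = k \<Longrightarrow> Fk i u = None \<longleftrightarrow> phi i u = 0"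
    using Ck unfolding cr_def by blast
  have Ek_None: "\<And>i u. length u = k \<Longrightarrow> Ek i u = None \<longleftrightarrow> eps i u = 0"
    using Ck unfolding cr_def by blast
  have Fk_Some: "\<And>i u c. length u = k \<Longrightarrow> Fk i u = Some c \<Longrightarrow> length c = k \<and> Ek i c = Some u \<and> phi i c = phi i u - 1"
    using Ck unfolding cr_def by blast
  have Ek_Some: "\<And>i u c. length u = k \<Longrightarrow> Ek i u = Some c \<Longrightarrow> length c = k \<and> Fk i c = Some u \<and> eps i c = eps i u - 1"
    using Ck unfolding cr_def by blast
  have F'_eq: "\<And>i u x. length u = k \<Longrightarrow> F' i (u @ [x]) = (if ph0 e i x < phi i u then map_option (\<lambda>u'. u' @ [x]) (Fk i u)
        else map_option (\<lambda>x'. u @ [x']) (f i x))"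
    unfolding F'_def Fk_def
    using cr_phi[OF C] cr_eps[OF Cb] by (simp add: Let_def tens_f_def option.map_comp comp_def)
  have E'_eq: "\<And>i u x. length u = k \<Longrightarrow> E' i (u @ [x]) = (if ph0 e i x \<le> phi i u then map_option (\<lambda>u'. u' @ [x]) (Ek i u)
        else map_option (\<lambda>x'. u @ [x']) (e i x))"
    unfolding E'_def Ek_def
    using cr_phi[OF C] cr_eps[OF Cb] by (simp add: Let_def tens_e_def option.map_comp comp_def)
  define phi' where "phi' i w = ph0 f i (last w) + (phi i (butlast w) - ph0 e i (last w))" for i w
  define eps' where "eps' i w = eps i (butlast w) + (ph0 e i (last w) - phi i (butlast w))" for i w
  have split: "\<And>w. length w = Suc k \<Longrightarrow> \<exists>u x. w = u @ [x] \<and> length u = k"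
    by (metis append_butlast_last_id length_butlast list.size(3) diff_Suc_1 nat.simps(3))
  have ph0_le: "\<And>g i a. ph0 g i a \<le> 1" by (simp add: ph0_def)
  have ph0_1: "\<And>g i a. g i a \<noteq> None \<Longrightarrow> ph0 g i a = 1" by (simp add: ph0_def)
  have ph0_0: "\<And>g i a. g i a = None \<Longrightarrow> ph0 g i a = 0" by (simp add: ph0_def)
  have dj': "\<And>i a. e i a \<noteq> None \<Longrightarrow> f i a = None" using dj by (metis option.distinct(1))
  have pw: "\<And>i u x. phi' i (u @ [x]) = ph0 f i x + (phi i u - ph0 e i x)" by (simp add: phi'_def)
  have ew: "\<And>i u x. eps' i (u @ [x]) = eps i u + (ph0 e i x - phi i u)" by (simp add: eps'_def)
  have crw: "(F' i (u @ [x]) = None \<longleftrightarrow> phi' i (u @ [x]) = 0) \<and> (E' i (u @ [x]) = None \<longleftrightarrow> eps' i (u @ [x]) = 0) \<and>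
   (\<forall>c. F' i (u @ [x]) = Some c \<longrightarrow> length c = Suc k \<and> E' i c = Some (u @ [x]) \<and> phi' i c = phi' i (u @ [x]) - 1) \<and>
   (\<forall>c. E' i (u @ [x]) = Some c \<longrightarrow> length c = Suc k \<and> F' i c = Some (u @ [x]) \<and> eps' i c = eps' i (u @ [x]) - 1)"
    if lu: "length u = k" for i u x
  proof (intro conjI)
    show "(F' i (u @ [x]) = None) = (phi' i (u @ [x]) = 0)"
    proof (cases "ph0 e i x < phi i u")
      case True then show ?thesis using Fk_None[OF lu, of i] by (simp add: F'_eq[OF lu] pw)
    next
      case False then show ?thesis by (simp add: F'_eq[OF lu] pw ph0_def)
    qed
    show "(E' i (u @ [x]) = None) = (eps' i (u @ [x]) = 0)"
    proof (cases "ph0 e i x \<le> phi i u")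
      case True then show ?thesis using Ek_None[OF lu, of i] by (simp add: E'_eq[OF lu] ew)
    next
      case False then show ?thesis by (simp add: E'_eq[OF lu] ew ph0_def split: if_splits)
    qed
    show "\<forall>c. F' i (u @ [x]) = Some c \<longrightarrow> length c = Suc k \<and> E' i c = Some (u @ [x]) \<and> phi' i c = phi' i (u @ [x]) - 1"
    proof (intro allI impI)
    fix c assume Fc: "F' i (u @ [x]) = Some c"
    show "length c = Suc k \<and> E' i c = Some (u @ [x]) \<and> phi' i c = phi' i (u @ [x]) - 1"
    proof (cases "ph0 e i x < phi i u")
      case True
      then obtain u' where u': "Fk i u = Some u'" "c = u' @ [x]" using Fc by (auto simp: F'_eq[OF lu])
      from Fk_Some[OF lu u'(1)] have h: "length u' = k" "Ek i u' = Some u" "phi i u' = phi i u - 1" by auto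
      have "ph0 e i x \<le> phi i u'" using True h(3) by simp
      then show ?thesis using h True by (simp add: u'(2) E'_eq[OF h(1)] pw)
    next
      case False
      then obtain x' where x': "f i x = Some x'" "c = u @ [x']" using Fc by (auto simp: F'_eq[OF lu])
      have ex': "e i x' = Some x" using fe x'(1) by blast
      have ex0: "ph0 e i x = 0" using dj x'(1) by (simp add: ph0_def)
      have p0: "phi i u = 0" using False ex0 by simp
      have fx'0: "ph0 f i x' = 0" using dj' ex' by (simp add: ph0_def)
      have ex'1: "ph0 e i x' = 1" using ex' by (simp add: ph0_def)
      show ?thesis using lu ex' p0 fx'0 ex'1 x' by (simp add: E'_eq[OF lu] pw ph0_def)
    qed
    qed
    show "\<forall>c. E' i (u @ [x]) = Some c \<longrightarrow> length c = Suc k \<and> F' i c = Some (u @ [x]) \<and> eps' i c = eps' i (u @ [x]) - 1"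
    proof (intro allI impI)
    fix c assume Ec: "E' i (u @ [x]) = Some c"
    show "length c = Suc k \<and> F' i c = Some (u @ [x]) \<and> eps' i c = eps' i (u @ [x]) - 1"
    proof (cases "ph0 e i x \<le> phi i u")
      case True
      then obtain u' where u': "Ek i u = Some u'" "c = u' @ [x]" using Ec by (auto simp: E'_eq[OF lu])
      from Ek_Some[OF lu u'(1)] have h: "length u' = k" "Fk i u' = Some u" "eps i u' = eps i u - 1" by auto
      from Fk_Some[OF h(1) h(2)] have "phi i u = phi i u' - 1" by simp
      moreover have "phi i u' \<noteq> 0" using Fk_None[OF h(1), of i] h(2) by simp
      ultimately have pu': "phi i u' = Suc (phi i u)" by simp
      have "eps i u \<noteq> 0" using Ek_None[OF lu, of i] u'(1) by simp
      then show ?thesis using h True pu' by (simp add: u'(2) F'_eq[OF h(1)] ew)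
    next
      case False
      then obtain x' where x': "e i x = Some x'" "c = u @ [x']" using Ec by (auto simp: E'_eq[OF lu])
      have fx': "f i x' = Some x" using fe x'(1) by blast
      have ex1: "ph0 e i x = 1" using x'(1) by (simp add: ph0_def)
      have p0: "phi i u = 0" using False ex1 by simp
      have ex'0: "ph0 e i x' = 0" using dj fx' by (simp add: ph0_def)
      show ?thesis using lu fx' p0 ex'0 ex1 x' by (simp add: F'_eq[OF lu] ew ph0_def)
    qed
    qed
  qed
  have inv2: "Xi w' = Xi (u @ [x]) \<and> (set (u @ [x]) \<subseteq> A \<longrightarrow> set w' \<subseteq> A) \<and>
     (last w' = last (u @ [x]) \<or> (f i (last (u @ [x])) = Some (last w') \<and> phi' i (u @ [x]) = 1))"
    if lu: "length u = k" and Fw: "F' i (u @ [x]) = Some w'" for i u x w'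
  proof (cases "ph0 e i x < phi i u")
    case True
    then obtain u' where u': "Fk i u = Some u'" "w' = u' @ [x]" using Fw by (auto simp: F'_eq[OF lu])
    from Fk_Some[OF lu u'(1)] have lu': "length u' = k" by simp
    from I2[OF lu, of i u'] u'(1) have h: "Xi u' = Xi u" "set u \<subseteq> A \<longrightarrow> set u' \<subseteq> A"
      "last u' = last u \<or> f i (last u) = Some (last u') \<and> phi i u = 1" by (auto simp: Fk_def)
    show ?thesis
    proof (cases "u = []")
      case True
      then have "u' = []" using lu lu' by simp
      then show ?thesis using True u' by simp
    next
      case False
      then have ne': "u' \<noteq> []" using lu lu' by auto
      have "(last u' < x) = (last u < x)"
      proof (cases "last u' = last u")
        case False
        with h(3) have fl: "f i (last u) = Some (last u')" and p1: "phi i u = 1" by auto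
        have "last u' = Suc (last u)" using fs fl by blast
        moreover have "x \<noteq> Suc (last u)"
        proof
          assume "x = Suc (last u)"
          then have "e i x = Some (last u)" using fe fl \<open>last u' = Suc (last u)\<close> by simp
          then have "ph0 e i x = 1" by (simp add: ph0_def)
          then show False using True p1 by simp
        qed
        ultimately show ?thesis by auto
      qed simp
      then show ?thesis using False ne' h u'(2) by (simp add: Xi_snoc)
    qed
  next
    case False
    then obtain x' where x': "f i x = Some x'" "w' = u @ [x']" using Fw by (auto simp: F'_eq[OF lu])
    have ex0: "ph0 e i x = 0" using dj x'(1) by (simp add: ph0_def)
    have p0: "phi i u = 0" using False ex0 by simp
    have xs: "x' = Suc x" using fs x'(1) by blast
    have "phi' i (u @ [x]) = 1" using x'(1) p0 by (simp add: pw ph0_def)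
    moreover have "Xi w' = Xi (u @ [x])"
    proof (cases "u = []")
      case True then show ?thesis using x' by (simp add: Xi_single)
    next
      case ne: False
      have "last u \<noteq> x"
      proof
        assume "last u = x"
        then have "phi i u \<ge> 1" using I1[OF lu ne, of i] x'(1) by simp
        then show False using p0 by simp
      qed
      then have "(last u < x') = (last u < x)" using xs by auto
      then show ?thesis using ne x'(2) by (simp add: Xi_snoc)
    qed
    ultimately show ?thesis using x' fA by auto
  qed
  have inv3: "Xi w' = Xi (u @ [x]) \<and> (set (u @ [x]) \<subseteq> A \<longrightarrow> set w' \<subseteq> A) \<and>
     (last w' = last (u @ [x]) \<or> (e i (last (u @ [x])) = Some (last w') \<and> phi' i (u @ [x]) = 0))"
    if lu: "length u = k" and Ew: "E' i (u @ [x]) = Some w'" for i u x w'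
  proof (cases "ph0 e i x \<le> phi i u")
    case True
    then obtain u' where u': "Ek i u = Some u'" "w' = u' @ [x]" using Ew by (auto simp: E'_eq[OF lu])
    from Ek_Some[OF lu u'(1)] have lu': "length u' = k" by simp
    from I3[OF lu, of i u'] u'(1) have h: "Xi u' = Xi u" "set u \<subseteq> A \<longrightarrow> set u' \<subseteq> A"
      "last u' = last u \<or> e i (last u) = Some (last u') \<and> phi i u = 0" by (auto simp: Ek_def)
    show ?thesis
    proof (cases "u = []")
      case True
      then have "u' = []" using lu lu' by simp
      then show ?thesis using True u' by simp
    next
      case False
      then have ne': "u' \<noteq> []" using lu lu' by auto
      have "(last u' < x) = (last u < x)"
      proof (cases "last u' = last u")
        case False
        with h(3) have el: "e i (last u) = Some (last u')" and p0: "phi i u = 0" by auto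
        have "last u = Suc (last u')" using fs fe el by blast
        moreover have "x \<noteq> last u"
        proof
          assume "x = last u"
          then have "ph0 e i x = 1" using el by (simp add: ph0_def)
          then show False using True p0 by simp
        qed
        ultimately show ?thesis by auto
      qed simp
      then show ?thesis using False ne' h u'(2) by (simp add: Xi_snoc)
    qed
  next
    case False
    then obtain x' where x': "e i x = Some x'" "w' = u @ [x']" using Ew by (auto simp: E'_eq[OF lu])
    have fx': "f i x' = Some x" using fe x'(1) by blast
    have ex1: "ph0 e i x = 1" using x'(1) by (simp add: ph0_def)
    have p0: "phi i u = 0" using False ex1 by simp
    have xs: "x = Suc x'" using fs fx' by blast
    have "ph0 f i x = 0" using dj' x'(1) by (simp add: ph0_def)
    then have "phi' i (u @ [x]) = 0" using p0 by (simp add: pw)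
    moreover have "Xi w' = Xi (u @ [x])"
    proof (cases "u = []")
      case True then show ?thesis using x' by (simp add: Xi_single)
    next
      case ne: False
      have "last u \<noteq> x'"
      proof
        assume "last u = x'"
        then have "phi i u \<ge> 1" using I1[OF lu ne, of i] fx' by simp
        then show False using p0 by simp
      qed
      then have "(last u < x') = (last u < x)" using xs by auto
      then show ?thesis using ne x'(2) by (simp add: Xi_snoc)
    qed
    ultimately show ?thesis using x' eA by auto
  qed
  have crS: "cr {w. length w = Suc k} E' F' phi' eps'"
    unfolding cr_def
  proof (intro allI ballI)
    fix i and w :: "nat list" assume "w \<in> {w. length w = Suc k}"
    then have "length w = Suc k" by simp
    then obtain u x where w: "w = u @ [x]" "length u = k" using split by blast
    show "(F' i w = None \<longleftrightarrow> phi' i w = 0) \<and> (E' i w = None \<longleftrightarrow> eps' i w = 0) \<and>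
      (\<forall>c. F' i w = Some c \<longrightarrow> c \<in> {w. length w = Suc k} \<and> E' i c = Some w \<and> phi' i c = phi' i w - 1) \<and>
      (\<forall>c. E' i w = Some c \<longrightarrow> c \<in> {w. length w = Suc k} \<and> F' i c = Some w \<and> eps' i c = eps' i w - 1)"
      using crw[OF w(2), of i x] unfolding w(1) by simp
  qed
  have J1: "\<forall>i w. length w = Suc k \<longrightarrow> w \<noteq> [] \<longrightarrow> f i (last w) \<noteq> None \<longrightarrow> phi' i w \<ge> 1"
    by (auto simp: phi'_def ph0_def)
  have J2: "\<forall>i w w'. length w = Suc k \<longrightarrow> F' i w = Some w' \<longrightarrow> Xi w' = Xi w \<and> (set w \<subseteq> A \<longrightarrow> set w' \<subseteq> A) \<and>
     (last w' = last w \<or> (f i (last w) = Some (last w') \<and> phi' i w = 1))"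
  proof (intro allI impI)
    fix i w w' assume "length w = Suc k" "F' i w = Some w'"
    then obtain u x where w: "w = u @ [x]" "length u = k" using split by blast
    show "Xi w' = Xi w \<and> (set w \<subseteq> A \<longrightarrow> set w' \<subseteq> A) \<and> (last w' = last w \<or> (f i (last w) = Some (last w') \<and> phi' i w = 1))"
      using inv2[OF w(2)] \<open>F' i w = Some w'\<close> unfolding w(1) by blast
  qed
  have J3: "\<forall>i w w'. length w = Suc k \<longrightarrow> E' i w = Some w' \<longrightarrow> Xi w' = Xi w \<and> (set w \<subseteq> A \<longrightarrow> set w' \<subseteq> A) \<and>
     (last w' = last w \<or> (e i (last w) = Some (last w') \<and> phi' i w = 0))"
  proof (intro allI impI)
    fix i w w' assume "length w = Suc k" "E' i w = Some w'"
    then obtain u x where w: "w = u @ [x]" "length u = k" using split by blast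
    show "Xi w' = Xi w \<and> (set w \<subseteq> A \<longrightarrow> set w' \<subseteq> A) \<and> (last w' = last w \<or> (e i (last w) = Some (last w') \<and> phi' i w = 0))"
      using inv3[OF w(2)] \<open>E' i w = Some w'\<close> unfolding w(1) by blast
  qed
  show ?case using crS J1 J2 J3 unfolding E'_def F'_def by blast
qed

lemma base_A: "n \<ge> 1 \<Longrightarrow> base (alphabet n) (eA n) (fA n)"
  unfolding base_def eA_def fA_def alphabet_def by auto

lemma C1: "n \<ge> 1 \<Longrightarrow> fC n i a = Some b \<Longrightarrow> b = Suc a"
  unfolding fC_def unb_def bar_def by (auto split: if_splits)
lemma C2: "n \<ge> 1 \<Longrightarrow> fC n i a = Some b \<Longrightarrow> b \<in> alphabet n"
  unfolding fC_def unb_def bar_def alphabet_def by (auto split: if_splits)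
lemma C3: "n \<ge> 1 \<Longrightarrow> eC n i a = Some b \<Longrightarrow> b \<in> alphabet n"
  unfolding eC_def unb_def bar_def alphabet_def by (auto split: if_splits)
lemma C4: "n \<ge> 1 \<Longrightarrow> fC n i a \<noteq> None \<Longrightarrow> eC n i a = None"
  unfolding eC_def fC_def unb_def bar_def by (auto split: if_splits)
lemma C5: "n \<ge> 1 \<Longrightarrow> fC n i a = Some b \<Longrightarrow> eC n i b = Some a"
  unfolding eC_def fC_def unb_def bar_def by (auto split: if_splits)
lemma C6: "n \<ge> 1 \<Longrightarrow> eC n i b = Some a \<Longrightarrow> fC n i a = Some b"
  unfolding eC_def fC_def unb_def bar_def by (auto split: if_splits)

lemma base_C: assumes "n \<ge> 1" shows "base (alphabet n) (eC n) (fC n)"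
  unfolding base_def
  by (intro conjI allI iffI impI; (erule C5[OF assms] | erule C6[OF assms] | erule C1[OF assms] | erule C4[OF assms] | erule C2[OF assms] | erule C3[OF assms]))

lemma cr_F_in: "cr V E F phi eps \<Longrightarrow> b \<in> V \<Longrightarrow> F i b = Some c \<Longrightarrow> c \<in> V"
  unfolding cr_def by blast
lemma cr_E_in: "cr V E F phi eps \<Longrightarrow> b \<in> V \<Longrightarrow> E i b = Some c \<Longrightarrow> c \<in> V"
  unfolding cr_def by blast

lemma main_gen:
  assumes B: "base (alphabet n) e f"
  shows "(\<forall>i. \<forall>b \<in> BXi n \<Xi>. \<forall>b'.
            (fst (word_ops e f n) i b = Some b' \<longrightarrow> b' \<in> BXi n \<Xi>) \<and> (snd (word_ops e f n) i b = Some b' \<longrightarrow> b' \<in> BXi n \<Xi>))"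
proof -
  obtain phi eps where H: "cr {w. length w = n} (fst (word_ops e f n)) (snd (word_ops e f n)) phi eps \<and>
 (\<forall>i u. length u = n \<longrightarrow> u \<noteq> [] \<longrightarrow> f i (last u) \<noteq> None \<longrightarrow> phi i u \<ge> 1) \<and>
 (\<forall>i u u'. length u = n \<longrightarrow> snd (word_ops e f n) i u = Some u' \<longrightarrow> Xi u' = Xi u \<and> (set u \<subseteq> alphabet n \<longrightarrow> set u' \<subseteq> alphabet n) \<and>
     (last u' = last u \<or> (f i (last u) = Some (last u') \<and> phi i u = 1))) \<and>
 (\<forall>i u u'. length u = n \<longrightarrow> fst (word_ops e f n) i u = Some u' \<longrightarrow> Xi u' = Xi u \<and> (set u \<subseteq> alphabet n \<longrightarrow> set u' \<subseteq> alphabet n) \<and>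
     (last u' = last u \<or> (e i (last u) = Some (last u') \<and> phi i u = 0)))"
    using levels[OF B, of n] by (elim exE)
  note C = conjunct1[OF H]
  note I2 = conjunct1[OF conjunct2[OF conjunct2[OF H]]]
  note I3 = conjunct2[OF conjunct2[OF conjunct2[OF H]]]
  show ?thesis
  proof (intro allI ballI conjI impI)
    fix i b b' assume b: "b \<in> BXi n \<Xi>"
    then have lb: "length b = n" "set b \<subseteq> alphabet n" "Xi b = \<Xi>" by (auto simp: BXi_def words_def)
    { assume h: "fst (word_ops e f n) i b = Some b'"
      have "b' \<in> {w. length w = n}" using cr_E_in[OF C _ h] lb(1) by simp
      moreover have "Xi b' = Xi b" "set b' \<subseteq> alphabet n" using I3[rule_format, OF lb(1) h] lb(2) by auto
      ultimately show "b' \<in> BXi n \<Xi>" using lb by (simp add: BXi_def words_def) }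
    { assume h: "snd (word_ops e f n) i b = Some b'"
      have "b' \<in> {w. length w = n}" using cr_F_in[OF C _ h] lb(1) by simp
      moreover have "Xi b' = Xi b" "set b' \<subseteq> alphabet n" using I2[rule_format, OF lb(1) h] lb(2) by auto
      ultimately show "b' \<in> BXi n \<Xi>" using lb by (simp add: BXi_def words_def) }
  qed
qed

lemma rt_closed:
  assumes "\<forall>i \<in> I. \<forall>b \<in> BXi n \<Xi>. \<forall>b'. (E i b = Some b' \<longrightarrow> b' \<in> BXi n \<Xi>) \<and> (F i b = Some b' \<longrightarrow> b' \<in> BXi n \<Xi>)"
  shows "\<forall>b \<in> BXi n \<Xi>. \<forall>b'. (b, b') \<in> (crystal_edges (words n) I E F)\<^sup>* \<longrightarrow> b' \<in> BXi n \<Xi>"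
proof (intro ballI allI impI)
  fix b b' assume "b \<in> BXi n \<Xi>" "(b, b') \<in> (crystal_edges (words n) I E F)\<^sup>*"
  then show "b' \<in> BXi n \<Xi>"
    by (induction rule: rtrancl_induct[OF \<open>(b, b') \<in> _\<close>]) (use assms in \<open>auto simp: crystal_edges_def\<close>)
qed

theorem mainTheorem8:
  fixes n :: nat and \<Xi> :: "nat list"
  assumes "n \<ge> 1" and "length \<Xi> = n - 1" and "set \<Xi> \<subseteq> {0, 1}"
  shows "(\<forall>i \<in> {1 .. 2 * n - 1}. \<forall>b \<in> BXi n \<Xi>. \<forall>b'.
            (eAw n i b = Some b' \<longrightarrow> b' \<in> BXi n \<Xi>) \<and> (fAw n i b = Some b' \<longrightarrow> b' \<in> BXi n \<Xi>))
       \<and> (\<forall>i \<in> {1 .. n}. \<forall>b \<in> BXi n \<Xi>. \<forall>b'.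
            (eCw n i b = Some b' \<longrightarrow> b' \<in> BXi n \<Xi>) \<and> (fCw n i b = Some b' \<longrightarrow> b' \<in> BXi n \<Xi>))
       \<and> (\<forall>b \<in> BXi n \<Xi>. \<forall>b'.
            (b, b') \<in> (crystal_edges (words n) {1 .. 2 * n - 1} (eAw n) (fAw n))\<^sup>* \<longrightarrow> b' \<in> BXi n \<Xi>)
       \<and> (\<forall>b \<in> BXi n \<Xi>. \<forall>b'.
            (b, b') \<in> (crystal_edges (words n) {1 .. n} (eCw n) (fCw n))\<^sup>* \<longrightarrow> b' \<in> BXi n \<Xi>)"
proof -
  have A: "\<forall>i \<in> {1 .. 2 * n - 1}. \<forall>b \<in> BXi n \<Xi>. \<forall>b'.
            (eAw n i b = Some b' \<longrightarrow> b' \<in> BXi n \<Xi>) \<and> (fAw n i b = Some b' \<longrightarrow> b' \<in> BXi n \<Xi>)"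
    using main_gen[OF base_A[OF assms(1)], of \<Xi>] unfolding eAw_def fAw_def by blast
  have C: "\<forall>i \<in> {1 .. n}. \<forall>b \<in> BXi n \<Xi>. \<forall>b'.
            (eCw n i b = Some b' \<longrightarrow> b' \<in> BXi n \<Xi>) \<and> (fCw n i b = Some b' \<longrightarrow> b' \<in> BXi n \<Xi>)"
    using main_gen[OF base_C[OF assms(1)], of \<Xi>] unfolding eCw_def fCw_def by blast
  show ?thesis using A C rt_closed[OF A] rt_closed[OF C] by blast
qed

end
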